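(* Let $n\geq 2$ and let $\mathcal{G}=(\mathcal{V},\mathcal{E})$ be a directed graph on $\mathcal{V}=\{1,\ldots,n\}$ in which every node has at least one outgoing edge. Let $A=(a_{ij})\in\mathbb{R}^{n\times n}$ be its hyperlink matrix, let $m\in(0,1)$, and let $x^*\in\mathbb{R}^n$ be the PageRank vector. Consider the iteration with initial states $x(0)=z(0)=\frac{m}{n}\mathbf{1}_n$ and, for $k\geq 0$, $$x(k+1)=x(k)+(1-m)Az(k),\qquad z(k+1)=(1-m)Az(k).$$ Then: (i) $z(k)\to 0$ as $k\to\infty$; (ii) $x(k)\leq x(k+1)\leq x^*$ for all $k\geq 0$; (iii) $x(k)\to x^*$ as $k\to\infty$.
   Context: Write $(i,j)\in\mathcal{E}$ if node (page) $i$ has a link to page $j$. $\mathcal{L}_j^{\text{out}}=\{i:(j,i)\in\mathcal{E}\}$ and $n_j=|\mathcal{L}_j^{\text{out}}|\geq 1$. The hyperlink matrix is defined by $a_{ij}=1/n_j$ if $i\in\mathcal{L}_j^{\text{out}}$ and $a_{ij}=0$ otherwise; it is column stochastic. The PageRank vector $x^*$ is the vector satisfying $x^*=(1-m)Ax^*+\frac{m}{n}\mathbf{1}_n$ and $\mathbf{1}_n^Tx^*=1$, where $\mathbf{1}_n$ is the all-ones vector. Inequalities between vectors are entrywise. *)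

theory Defs
  imports "HOL-Analysis.Analysis"
begin

text \<open>Directed graph on the finite node type 'n: E j i means page j links to page i,
  i.e. (j,i) is an edge.\<close>

definition out_links :: "('n \<Rightarrow> 'n \<Rightarrow> bool) \<Rightarrow> 'n \<Rightarrow> 'n set" where
  "out_links E j = {i. E j i}"

definition hyperlink :: "('n::finite \<Rightarrow> 'n \<Rightarrow> bool) \<Rightarrow> real^'n^'n" where
  "hyperlink E = (\<chi> i j. if i \<in> out_links E j then 1 / real (card (out_links E j)) else 0)"

definition is_pagerank :: "('n::finite \<Rightarrow> 'n \<Rightarrow> bool) \<Rightarrow> real \<Rightarrow> real^'n \<Rightarrow> bool" where
  "is_pagerank E m x \<longleftrightarrow>
     x = (1 - m) *\<^sub>R (hyperlink E *v x) + (\<chi> i. m / real CARD('n)) \<and> (\<Sum>i\<in>UNIV. x $ i) = 1"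

end

theory Submission
  imports Defs
begin

definition L1 :: "real^'n::finite \<Rightarrow> real" where
  "L1 v = (\<Sum>i\<in>UNIV. \<bar>v $ i\<bar>)"

lemma hyp_nonneg: "0 \<le> hyperlink E $ i $ j"
  by (simp add: hyperlink_def)

lemma hyp_colsum:
  fixes E :: "'n::finite \<Rightarrow> 'n \<Rightarrow> bool"
  assumes "out_links E j \<noteq> {}"
  shows "(\<Sum>i\<in>UNIV. hyperlink E $ i $ j) = 1"
proof -
  have "(\<Sum>i\<in>UNIV. hyperlink E $ i $ j) = (\<Sum>i\<in>UNIV. if i \<in> out_links E j then 1 / real (card (out_links E j)) else 0)"
    by (simp add: hyperlink_def)
  also have "\<dots> = (\<Sum>i\<in>out_links E j. 1 / real (card (out_links E j)))"
    by (simp add: sum.If_cases)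
  also have "\<dots> = 1" using assms by simp
  finally show ?thesis .
qed

lemma L1_hyp:
  fixes E :: "'n::finite \<Rightarrow> 'n \<Rightarrow> bool"
  assumes "\<forall>j. out_links E j \<noteq> {}"
  shows "L1 (hyperlink E *v v) \<le> L1 v"
proof -
  have "L1 (hyperlink E *v v) = (\<Sum>i\<in>UNIV. \<bar>\<Sum>j\<in>UNIV. hyperlink E $ i $ j * v $ j\<bar>)"
    by (simp add: L1_def matrix_vector_mult_def)
  also have "\<dots> \<le> (\<Sum>i\<in>UNIV. \<Sum>j\<in>UNIV. hyperlink E $ i $ j * \<bar>v $ j\<bar>)"
  proof (rule sum_mono)
    fix i
    have "\<bar>\<Sum>j\<in>UNIV. hyperlink E $ i $ j * v $ j\<bar> \<le> (\<Sum>j\<in>UNIV. \<bar>hyperlink E $ i $ j * v $ j\<bar>)"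
      by (rule sum_abs)
    also have "\<dots> = (\<Sum>j\<in>UNIV. hyperlink E $ i $ j * \<bar>v $ j\<bar>)"
      by (simp add: abs_mult hyp_nonneg)
    finally show "\<bar>\<Sum>j\<in>UNIV. hyperlink E $ i $ j * v $ j\<bar> \<le> (\<Sum>j\<in>UNIV. hyperlink E $ i $ j * \<bar>v $ j\<bar>)" .
  qed
  also have "\<dots> = (\<Sum>j\<in>UNIV. (\<Sum>i\<in>UNIV. hyperlink E $ i $ j) * \<bar>v $ j\<bar>)"
    by (subst sum.swap) (simp add: sum_distrib_right)
  also have "\<dots> = L1 v" using hyp_colsum[of E] assms by (simp add: L1_def)
  finally show ?thesis .
qed

lemma comp_le_L1: "\<bar>v $ i\<bar> \<le> L1 v"
  unfolding L1_def by (rule member_le_sum) auto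

lemma L1_scale: "L1 (c *\<^sub>R v) = \<bar>c\<bar> * L1 v"
  by (simp add: L1_def abs_mult sum_distrib_left)

lemma decay_tendsto:
  fixes E :: "'n::finite \<Rightarrow> 'n \<Rightarrow> bool" and w :: "nat \<Rightarrow> real^'n"
  assumes "\<forall>j. out_links E j \<noteq> {}" and "0 < m" and "m < 1"
    and "\<And>k. w (Suc k) = (1 - m) *\<^sub>R (hyperlink E *v w k)"
  shows "w \<longlonglongrightarrow> 0"
proof -
  have b: "L1 (w k) \<le> (1 - m) ^ k * L1 (w 0)" for k
  proof (induction k)
    case 0 then show ?case by simp
  next
    case (Suc k)
    have "L1 (w (Suc k)) = (1 - m) * L1 (hyperlink E *v w k)"
      using assms by (simp add: L1_scale)
    also have "\<dots> \<le> (1 - m) * L1 (w k)"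
      using L1_hyp[OF assms(1)] assms by (intro mult_left_mono) auto
    also have "\<dots> \<le> (1 - m) * ((1 - m) ^ k * L1 (w 0))"
      using Suc assms by (intro mult_left_mono) auto
    finally show ?case by simp
  qed
  have lim: "(\<lambda>k. (1 - m) ^ k * L1 (w 0)) \<longlonglongrightarrow> 0"
    using assms by (intro tendsto_mult_left_zero LIMSEQ_power_zero) auto
  show ?thesis
  proof (rule vec_tendstoI)
    fix i
    show "((\<lambda>k. w k $ i) \<longlongrightarrow> 0 $ i) sequentially"
    proof -
      have "((\<lambda>k. w k $ i) \<longlongrightarrow> 0) sequentially"
      proof (rule Lim_null_comparison[OF _ lim])
        show "\<forall>\<^sub>F k in sequentially. norm (w k $ i) \<le> (1 - m) ^ k * L1 (w 0)"
          using comp_le_L1 b by (auto intro!: always_eventually order_trans[OF comp_le_L1 b])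
      qed
      then show ?thesis by simp
    qed
  qed
qed

theorem lemma1:
  fixes E :: "'n::finite \<Rightarrow> 'n \<Rightarrow> bool"
    and m :: real and xs :: "real^'n" and x z :: "nat \<Rightarrow> real^'n"
  assumes "CARD('n) \<ge> 2"
    and "\<forall>j. out_links E j \<noteq> {}"
    and "0 < m" and "m < 1"
    and "is_pagerank E m xs"
    and "x 0 = (\<chi> i. m / real CARD('n))"
    and "z 0 = (\<chi> i. m / real CARD('n))"
    and "\<And>k. x (Suc k) = x k + (1 - m) *\<^sub>R (hyperlink E *v z k)"
    and "\<And>k. z (Suc k) = (1 - m) *\<^sub>R (hyperlink E *v z k)"
  shows "z \<longlonglongrightarrow> 0
         \<and> (\<forall>k. \<forall>i. x k $ i \<le> x (Suc k) $ i \<and> x (Suc k) $ i \<le> xs $ i)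
         \<and> x \<longlonglongrightarrow> xs"
proof -
  define H where "H = hyperlink E"
  define c :: "real^'n" where "c = (\<chi> i. m / real CARD('n))"
  have zlim: "z \<longlonglongrightarrow> 0"
    using decay_tendsto[OF assms(2,3,4)] assms(9) by blast
  have xrec: "x (Suc k) = c + (1 - m) *\<^sub>R (H *v x k)" for k
  proof (induction k)
    case 0 then show ?case using assms(6,7,8) by (simp add: c_def H_def)
  next
    case (Suc k)
    have "x (Suc (Suc k)) = x (Suc k) + (1 - m) *\<^sub>R (H *v z (Suc k))"
      using assms(8) H_def by simp
    also have "\<dots> = c + (1 - m) *\<^sub>R (H *v x k) + (1 - m) *\<^sub>R (H *v ((1 - m) *\<^sub>R (H *v z k)))"
      using Suc assms(9) H_def by simp
    also have "\<dots> = c + (1 - m) *\<^sub>R (H *v (x k + (1 - m) *\<^sub>R (H *v z k)))"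
      by (simp add: matrix_vector_right_distrib scaleR_right_distrib)
    also have "\<dots> = c + (1 - m) *\<^sub>R (H *v x (Suc k))"
      using assms(8) H_def by simp
    finally show ?case .
  qed
  have xsE: "xs = (1 - m) *\<^sub>R (H *v xs) + c"
    using assms(5) by (simp add: is_pagerank_def H_def c_def)
  define e where "e k = xs - x k" for k
  have erec: "e (Suc k) = (1 - m) *\<^sub>R (hyperlink E *v e k)" for k
  proof -
    have "e (Suc k) = (1 - m) *\<^sub>R (H *v xs) + c - (c + (1 - m) *\<^sub>R (H *v x k))"
      unfolding e_def using xsE xrec by metis
    also have "\<dots> = (1 - m) *\<^sub>R (H *v (xs - x k))"
      by (simp add: matrix_vector_mult_diff_distrib scaleR_diff_right)
    finally show ?thesis by (simp add: e_def H_def)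
  qed
  have elim: "e \<longlonglongrightarrow> 0"
    using decay_tendsto[OF assms(2,3,4)] erec by blast
  have xlim: "x \<longlonglongrightarrow> xs"
  proof -
    have "(\<lambda>k. xs - e k) \<longlonglongrightarrow> xs - 0"
      by (intro tendsto_diff tendsto_const elim)
    then show ?thesis by (simp add: e_def)
  qed
  have znn: "0 \<le> z k $ i" for k i
  proof (induction k arbitrary: i)
    case 0 then show ?case using assms(3,7) by simp
  next
    case (Suc k)
    have "0 \<le> (\<Sum>j\<in>UNIV. hyperlink E $ i $ j * z k $ j)"
      using Suc hyp_nonneg by (intro sum_nonneg mult_nonneg_nonneg) auto
    then show ?case using assms(4,9) by (simp add: matrix_vector_mult_def)
  qed
  have mono: "x k $ i \<le> x (Suc k) $ i" for k i
    using znn[of "Suc k" i] assms(8,9) by simp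
  have ub: "x k $ i \<le> xs $ i" for k i
  proof -
    have "incseq (\<lambda>k. x k $ i)" using mono by (simp add: incseq_SucI)
    moreover have "(\<lambda>k. x k $ i) \<longlonglongrightarrow> xs $ i"
      using xlim by (rule tendsto_vec_nth)
    ultimately show ?thesis by (rule incseq_le)
  qed
  show ?thesis using zlim mono ub xlim by blast
qed

end
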